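(* For every positive integer $m$, $\lim_{\theta\to0^+}L_{m+1}(\theta)\ge\lim_{\theta\to0^+}L_m(\theta)$.
   Context: $\lg$ denotes $\log_2$. For a positive integer $m$ and $0<\theta<1$, $$L_m(\theta)=\begin{cases}1+\lg m+\dfrac{\theta^{m/2}}{1-\theta^{m/2}}, & m=2^\beta \text{ for some integer } \beta\ge0,\\[2mm] 1+\lfloor\lg m\rfloor+\dfrac{\theta^{(2^{\lceil\lg m\rceil}-m)/2}}{1-\theta^{m/2}}, & \text{otherwise.}\end{cases}$$ *)

theory Defs
  imports "HOL-Analysis.Analysis"
begin

definition L :: "nat \<Rightarrow> real \<Rightarrow> real" where
  "L m \<theta> =
     (if \<exists>\<beta>::nat. m = 2 ^ \<beta>
      then 1 + log 2 (real m) + \<theta> powr (real m / 2) / (1 - \<theta> powr (real m / 2))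
      else 1 + real_of_int \<lfloor>log 2 (real m)\<rfloor>
             + \<theta> powr ((2 ^ nat \<lceil>log 2 (real m)\<rceil> - real m) / 2)
               / (1 - \<theta> powr (real m / 2)))"

end

theory Submission
  imports Defs
begin

lemma pw0: "c > 0 \<Longrightarrow> ((\<lambda>t::real. t powr c) \<longlongrightarrow> 0) (at_right 0)"
  by (rule tendsto_zero_powrI) (auto simp: eventually_at_right_less intro!: tendsto_ident_at eventually_mono[OF eventually_at_right_less])

lemma frac0: "c > 0 \<Longrightarrow> d > 0 \<Longrightarrow>
   ((\<lambda>t::real. t powr c / (1 - t powr d)) \<longlongrightarrow> 0) (at_right 0)"
proof -
  assume c: "c > 0" and d: "d > 0"
  have "((\<lambda>t::real. t powr c / (1 - t powr d)) \<longlongrightarrow> 0 / (1 - 0)) (at_right 0)"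
    by (intro tendsto_divide tendsto_diff tendsto_const pw0 c d) simp
  thus ?thesis by simp
qed

lemma Llim:
  assumes "m \<ge> 1"
  shows "(L m \<longlongrightarrow> 1 + real_of_int \<lfloor>log 2 (real m)\<rfloor>) (at_right 0)"
proof (cases "\<exists>\<beta>::nat. m = 2 ^ \<beta>")
  case True
  then obtain b::nat where b: "m = 2^b" by blast
  have lg: "log 2 (real m) = real b" using b by (simp add: log_nat_power)
  have "((\<lambda>t. 1 + log 2 (real m) + t powr (real m / 2) / (1 - t powr (real m / 2)))
        \<longlongrightarrow> 1 + log 2 (real m) + 0) (at_right 0)"
    using assms by (intro tendsto_intros frac0) auto
  moreover have "L m = (\<lambda>t. 1 + log 2 (real m) + t powr (real m / 2) / (1 - t powr (real m / 2)))"
    using True by (auto simp: L_def fun_eq_iff)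
  ultimately show ?thesis using lg by simp
next
  case False
  define k where "k = nat \<lceil>log 2 (real m)\<rceil>"
  have lpos: "log 2 (real m) \<ge> 0" using assms by simp
  have "real m = 2 powr log 2 (real m)" using assms by simp
  also have "\<dots> \<le> 2 powr real k" unfolding k_def using lpos
    by (intro powr_mono) auto
  also have "\<dots> = 2 ^ k" by (simp add: powr_realpow)
  finally have le: "real m \<le> 2 ^ k" .
  have ne: "real m \<noteq> 2 ^ k"
  proof
    assume "real m = 2 ^ k"
    hence "m = 2 ^ k" by (metis of_nat_eq_iff of_nat_numeral of_nat_power)
    thus False using False by blast
  qed
  have pos: "(2 ^ k - real m) / 2 > 0" using le ne by simp
  have "((\<lambda>t. 1 + real_of_int \<lfloor>log 2 (real m)\<rfloor> + t powr ((2 ^ k - real m) / 2) / (1 - t powr (real m / 2)))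
        \<longlongrightarrow> 1 + real_of_int \<lfloor>log 2 (real m)\<rfloor> + 0) (at_right 0)"
    using assms pos by (intro tendsto_intros frac0) auto
  moreover have "L m = (\<lambda>t. 1 + real_of_int \<lfloor>log 2 (real m)\<rfloor> + t powr ((2 ^ k - real m) / 2) / (1 - t powr (real m / 2)))"
    using False by (auto simp: L_def fun_eq_iff k_def)
  ultimately show ?thesis by simp
qed

theorem lemma5:
  fixes m :: nat
  assumes "m \<ge> 1"
  shows "\<exists>a b. (L m \<longlongrightarrow> a) (at_right 0) \<and> (L (m + 1) \<longlongrightarrow> b) (at_right 0) \<and> a \<le> b"
proof (intro exI conjI)
  show "(L m \<longlongrightarrow> 1 + real_of_int \<lfloor>log 2 (real m)\<rfloor>) (at_right 0)" using Llim assms by blast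
  show "(L (m+1) \<longlongrightarrow> 1 + real_of_int \<lfloor>log 2 (real (m+1))\<rfloor>) (at_right 0)" using Llim[of "m+1"] assms by simp
  have "log 2 (real m) \<le> log 2 (real (m+1))" using assms by simp
  thus "1 + real_of_int \<lfloor>log 2 (real m)\<rfloor> \<le> 1 + real_of_int \<lfloor>log 2 (real (m+1))\<rfloor>"
    by (simp add: floor_mono)
qed

end
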